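(* There exist an $\omega$-power-free infinite word $x$ over an infinite alphabet and a $k\in\mathbb{N}$ such that $\mathrm{AP}(x,k)$ is empty.
   Context: A factor is a contiguous subword; $u^\ell$ is $\ell$ concatenated copies of $u$. A word is $\omega$-power-free if for every finite (nonempty) factor $u$ there exists $\ell\in\mathbb{N}$ such that $u^\ell$ is not a factor. A $k$-anti-power is a word $w=w_1\cdots w_k$ with $|w_1|=\cdots=|w_k|$ and $w_1,\dots,w_k$ pairwise distinct. $\mathrm{AP}(x,k)$ is the set of $m\in\mathbb{N}=\{1,2,\dots\}$ such that the prefix of $x$ of length $km$ is a $k$-anti-power. *)

theory Defs
  imports Main
begin

definition factor :: "'a list \<Rightarrow> (nat \<Rightarrow> 'a) \<Rightarrow> bool" where
  "factor u x \<longleftrightarrow> (\<exists>i. \<forall>j<length u. x (i + j) = u ! j)"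

definition lpow :: "'a list \<Rightarrow> nat \<Rightarrow> 'a list" where
  "lpow u l = concat (replicate l u)"

definition omega_power_free :: "(nat \<Rightarrow> 'a) \<Rightarrow> bool" where
  "omega_power_free x \<longleftrightarrow>
     (\<forall>u. u \<noteq> [] \<and> factor u x \<longrightarrow> (\<exists>l::nat. l \<ge> 1 \<and> \<not> factor (lpow u l) x))"

definition anti_power :: "'a list \<Rightarrow> nat \<Rightarrow> bool" where
  "anti_power w k \<longleftrightarrow>
     (\<exists>m. length w = k * m \<and> distinct (map (\<lambda>i. take m (drop (i * m) w)) [0..<k]))"

definition wprefix :: "(nat \<Rightarrow> 'a) \<Rightarrow> nat \<Rightarrow> 'a list" where
  "wprefix x n = map x [0..<n]"

definition AP :: "(nat \<Rightarrow> 'a) \<Rightarrow> nat \<Rightarrow> nat set" where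
  "AP x k = {m. m \<ge> 1 \<and> anti_power (wprefix x (k * m)) k}"

end

theory Submission
  imports Defs "HOL-Library.Discrete_Functions"
begin

lemma lpow_length: "length (lpow u l) = l * length u"
  unfolding lpow_def by (induction l) auto

lemma lpow_nth: "j < l * length u \<Longrightarrow> lpow u l ! j = u ! (j mod length u)"
proof (induction l arbitrary: j)
  case 0 then show ?case by simp
next
  case (Suc l)
  have e: "lpow u (Suc l) = u @ lpow u l" unfolding lpow_def by simp
  show ?case
  proof (cases "j < length u")
    case True then show ?thesis by (simp add: e nth_append)
  next
    case False
    then have "j - length u < l * length u" using Suc.prems by auto
    then have "lpow u l ! (j - length u) = u ! ((j - length u) mod length u)" using Suc.IH by blast
    moreover have "(j - length u) mod length u = j mod length u"
      using False by (simp add: le_mod_geq)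
    ultimately show ?thesis using False by (simp add: e nth_append lpow_length)
  qed
qed

lemma opf_mono:
  fixes x :: "nat \<Rightarrow> nat"
  assumes mono: "\<And>a b. a \<le> b \<Longrightarrow> x a \<le> x b"
    and unb: "\<And>c. \<exists>N. x N > c"
  shows "omega_power_free x"
  unfolding omega_power_free_def
proof (intro allI impI)
  fix u :: "nat list"
  assume h: "u \<noteq> [] \<and> factor u x"
  show "\<exists>l::nat. l \<ge> 1 \<and> \<not> factor (lpow u l) x"
  proof (cases "\<exists>p<length u. u ! p \<noteq> u ! 0")
    case True
    then obtain p where p: "p < length u" "u ! p \<noteq> u ! 0" by blast
    have "\<not> factor (lpow u 2) x"
    proof
      assume "factor (lpow u 2) x"
      then obtain i where i: "\<forall>j<length (lpow u 2). x (i + j) = lpow u 2 ! j"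
        unfolding factor_def by blast
      have L: "length (lpow u 2) = 2 * length u" by (simp add: lpow_length)
      have xi: "x (i + j) = u ! (j mod length u)" if "j < 2 * length u" for j
        using i L that lpow_nth[of j 2 u] by simp
      have lp: "0 < length u" using h by simp
      have "x (i + p) = u ! p" using xi[of p] p by simp
      moreover have "x (i + 0) = u ! 0" using xi[of 0] lp by simp
      moreover have "x (i + length u) = u ! 0" using xi[of "length u"] lp by simp
      moreover have "x (i + 0) \<le> x (i + p)" by (rule mono) simp
      moreover have "x (i + p) \<le> x (i + length u)" by (rule mono) (use p in simp)
      ultimately show False using p by simp
    qed
    then show ?thesis by (intro exI[of _ 2]) simp
  next
    case False
    obtain N where N: "x N > u ! 0" using unb by blast
    have "\<not> factor (lpow u (N+1)) x"
    proof
      assume "factor (lpow u (N+1)) x"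
      then obtain i where i: "\<forall>j<length (lpow u (N+1)). x (i + j) = lpow u (N+1) ! j"
        unfolding factor_def by blast
      have lu: "length u \<ge> 1" using h by (cases u) auto
      have NL: "N < (N+1) * length u" using lu
        by (metis add_mult_distrib2 less_add_one mult.commute mult_le_mono2 nat_mult_1_right order_less_le_trans)
      have "x (i + N) = u ! (N mod length u)" using i NL lpow_nth[OF NL] by (simp add: lpow_length)
      also have "\<dots> = u ! 0" using False lu by (metis mod_less_divisor not_less_iff_gr_or_eq less_le_trans zero_less_one)
      finally have "x (i + N) = u ! 0" .
      moreover have "x N \<le> x (i + N)" by (rule mono) simp
      ultimately show False using N by simp
    qed
    then show ?thesis by (intro exI[of _ "N+1"]) simp
  qed
qed

lemma block_eq:
  assumes "(i + 1) * m \<le> k * m"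
  shows "take m (drop (i * m) (wprefix x (k * m))) = map x [i*m..<i*m+m]"
  using assms unfolding wprefix_def
  by (simp add: drop_map take_map algebra_simps)

theorem theorem3p7:
  shows "\<exists>(x :: nat \<Rightarrow> nat) (k :: nat). omega_power_free x \<and> k \<ge> 1 \<and> AP x k = {}"
proof (intro exI conjI)
  show "omega_power_free floor_log"
  proof (rule opf_mono)
    show "\<And>a b. a \<le> b \<Longrightarrow> floor_log a \<le> floor_log b" by (rule floor_log_le_iff)
    show "\<exists>N. floor_log N > c" for c by (rule exI[of _ "2^(Suc c)"]) simp
  qed
  show "(11::nat) \<ge> 1" by simp
  show "AP floor_log 11 = {}"
  proof (rule ccontr)
    assume "AP floor_log 11 \<noteq> {}"
    then obtain m where m: "m \<ge> 1" "anti_power (wprefix floor_log (11 * m)) 11"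
      unfolding AP_def by blast
    then obtain m' where m': "length (wprefix floor_log (11 * m)) = 11 * m'"
      "distinct (map (\<lambda>i. take m' (drop (i * m') (wprefix floor_log (11 * m)))) [0..<11])"
      unfolding anti_power_def by blast
    have "m' = m" using m'(1) by (simp add: wprefix_def)
    define p where "p = (2::nat) ^ floor_log m"
    have p1: "p \<le> m" using m floor_log_exp2_le[of m] p_def by simp
    have p2: "m < 2 * p" using floor_log_exp2_gt[of m] p_def by simp
    define A where "A = 8 * p"
    define i where "i = A div m + 1"
    have mm: "A mod m < m" using m(1) by simp
    have dm: "A div m * m + A mod m = A" by (rule div_mult_mod_eq)
    have im: "i * m = A div m * m + m" unfolding i_def by (simp add: algebra_simps)
    have Ai: "A < i * m" using mm dm im by linarith
    have Ai2: "i * m \<le> A + m" using dm im by linarith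
    have "A div m \<le> 8"
    proof -
      have "A div m \<le> A div p" using p1 p_def by (simp add: div_le_mono2)
      also have "\<dots> = 8" unfolding A_def p_def by simp
      finally show ?thesis .
    qed
    then have i9: "i \<le> 9" unfolding i_def by simp
    have e: "floor_log n = floor_log m + 3" if "i * m \<le> n" "n < i * m + 2 * m" for n
    proof (rule floor_log_eqI)
      show "0 < n" using that Ai by simp
      show "2 ^ (floor_log m + 3) \<le> n" using that Ai unfolding A_def p_def by (simp add: power_add)
      show "n < 2 * 2 ^ (floor_log m + 3)" using that Ai2 p2 unfolding A_def p_def by (simp add: power_add)
    qed
    have b1: "take m (drop (i * m) (wprefix floor_log (11 * m))) = map floor_log [i*m..<i*m+m]"
      by (rule block_eq) (use i9 in simp)
    have b2: "take m (drop ((i+1) * m) (wprefix floor_log (11 * m))) = map floor_log [(i+1)*m..<(i+1)*m+m]"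
      by (rule block_eq) (use i9 in simp)
    have eq: "map floor_log [i*m..<i*m+m] = map floor_log [(i+1)*m..<(i+1)*m+m]"
      by (rule nth_equalityI) (auto simp: e algebra_simps)
    define L where "L = map (\<lambda>i. take m (drop (i * m) (wprefix floor_log (11 * m)))) [0..<11]"
    have len: "length L = 11" unfolding L_def by simp
    have i1: "i < 11" "i + 1 < 11" using i9 by auto
    have u1: "[0..<(11::nat)] ! i = i" "[0..<(11::nat)] ! (i+1) = i+1"
      using i1 by (simp_all only: nth_upt)
    have Li: "L ! i = L ! (i+1)"
      unfolding L_def using i1 u1 b1 b2 eq by (simp only: nth_map length_upt) simp
    have dist: "distinct L" unfolding L_def using m'(2) \<open>m' = m\<close> by simp
    have "L ! i \<noteq> L ! (i+1)"
      using dist len i1 by (simp only: distinct_conv_nth) simp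
    then show False using Li by simp
  qed
qed

end
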